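(* Let $N\ge2$, $\gamma\in(0,1)$, and let $\{(Q_i,\mathcal D_i)\}_{i=1}^M$ be an ID code with deterministic decoders for $\mathrm{NL}_{[N]}$ with error probabilities $\lambda_{i\to j}$ ($i\ne j$) and $\lambda_{i\not\to i}$. Then there exist nonempty sets $\mathcal U_i\subseteq[N]$, $i=1,\dots,M$, such that the ID code $\{(\mathcal U_i,\mathcal D_i)\}_{i=1}^M$ (message $i$ encoded uniformly on $\mathcal U_i$) has error probabilities $\tilde\lambda_{i\to j}\le\lambda_{i\to j}\cdot\frac{(1+2\gamma)N^{\gamma}}{\gamma(1-N^{-\gamma})}$ for all $i\ne j$ and $\tilde\lambda_{i\not\to i}\le\lambda_{i\not\to i}\cdot\frac{(1+2\gamma)N^{\gamma}}{\gamma(1-N^{-\gamma})}$ for all $i$.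
   Context: $\mathrm{NL}_{[N]}$ is the noiseless channel with input and output alphabet $[N]=\{1,\dots,N\}$. An ID code with deterministic decoders for $\mathrm{NL}_{[N]}$ is a family $\{(Q_i,\mathcal D_i)\}_{i=1}^M$ with $Q_i$ a probability distribution on $[N]$ and $\mathcal D_i\subseteq[N]$; its error probabilities are $\lambda_{i\to j}=Q_i(\mathcal D_j)$ for $i\ne j$ and $\lambda_{i\not\to i}=Q_i([N]\setminus\mathcal D_i)$. For nonempty $\mathcal U_i\subseteq[N]$, the code $\{(\mathcal U_i,\mathcal D_i)\}$ denotes the code in which $Q_i$ is the uniform distribution on $\mathcal U_i$. *)

theory Defs
  imports "HOL-Analysis.Analysis"
begin

definition is_distr :: "nat \<Rightarrow> (nat \<Rightarrow> real) \<Rightarrow> bool" where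
  "is_distr N P \<longleftrightarrow> (\<forall>x\<in>{1..N}. P x \<ge> 0) \<and> (\<forall>x. x \<notin> {1..N} \<longrightarrow> P x = 0)
                       \<and> (\<Sum>x\<in>{1..N}. P x) = 1"

definition is_ID_code :: "nat \<Rightarrow> nat \<Rightarrow> (nat \<Rightarrow> nat \<Rightarrow> real) \<Rightarrow> (nat \<Rightarrow> nat set) \<Rightarrow> bool" where
  "is_ID_code N M Q D \<longleftrightarrow> (\<forall>i\<in>{1..M}. is_distr N (Q i) \<and> D i \<subseteq> {1..N})"

definition prob_of :: "nat \<Rightarrow> (nat \<Rightarrow> real) \<Rightarrow> nat set \<Rightarrow> real" where
  "prob_of N P A = (\<Sum>x\<in>{1..N} \<inter> A. P x)"

definition err_cross :: "nat \<Rightarrow> (nat \<Rightarrow> nat \<Rightarrow> real) \<Rightarrow> (nat \<Rightarrow> nat set) \<Rightarrow> nat \<Rightarrow> nat \<Rightarrow> real" where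
  "err_cross N Q D i j = prob_of N (Q i) (D j)"

definition err_miss :: "nat \<Rightarrow> (nat \<Rightarrow> nat \<Rightarrow> real) \<Rightarrow> (nat \<Rightarrow> nat set) \<Rightarrow> nat \<Rightarrow> real" where
  "err_miss N Q D i = prob_of N (Q i) ({1..N} - D i)"

definition unif :: "nat set \<Rightarrow> nat \<Rightarrow> real" where
  "unif U x = (if x \<in> U then 1 / real (card U) else 0)"

end

theory Submission
  imports Defs "HOL-Analysis.Harmonic_Numbers"
begin

definition rk :: "nat set \<Rightarrow> (nat \<Rightarrow> real) \<Rightarrow> nat \<Rightarrow> nat" where
  "rk S P x = card {y\<in>S. P x \<le> P y}"

lemma rk_sum_le:
  "finite S \<Longrightarrow> card S = n \<Longrightarrow> (\<Sum>x\<in>S. 1 / real (rk S P x)) \<le> harm n"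
proof (induction n arbitrary: S)
  case 0
  then show ?case by (simp add: harm_def)
next
  case (Suc n)
  then have ne: "S \<noteq> {}" by auto
  obtain x0 where x0: "x0 \<in> S" "\<forall>y\<in>S. P x0 \<le> P y"
    using Min_in[of "P ` S"] Min_le[of "P ` S"] Suc.prems ne by fastforce
  have r0: "rk S P x0 = Suc n"
  proof -
    have "{y\<in>S. P x0 \<le> P y} = S" using x0 by auto
    thus ?thesis using Suc.prems by (simp add: rk_def)
  qed
  let ?T = "S - {x0}"
  have T: "finite ?T" "card ?T = n" using Suc.prems x0 by auto
  have le: "1 / real (rk S P y) \<le> 1 / real (rk ?T P y)" if "y \<in> ?T" for y
  proof -
    have "rk ?T P y \<le> rk S P y" unfolding rk_def
      by (rule card_mono) (use Suc.prems in auto)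
    moreover have "rk ?T P y > 0" unfolding rk_def using that T(1)
      by (subst card_gt_0_iff) auto
    ultimately show ?thesis by (simp add: frac_le)
  qed
  have "(\<Sum>x\<in>S. 1 / real (rk S P x)) = 1 / real (Suc n) + (\<Sum>x\<in>?T. 1 / real (rk S P x))"
    using Suc.prems x0 r0 by (simp add: sum.remove)
  also have "\<dots> \<le> 1 / real (Suc n) + (\<Sum>x\<in>?T. 1 / real (rk ?T P x))"
    using le by (intro add_left_mono sum_mono) auto
  also have "\<dots> \<le> 1 / real (Suc n) + harm n" using Suc.IH[OF T] by simp
  finally show ?case by (simp add: harm_Suc field_simps)
qed

lemma main_one:
  assumes "N \<ge> 1" "is_distr N P"
  shows "\<exists>U. U \<noteq> {} \<and> U \<subseteq> {1..N} \<and> (\<forall>A. prob_of N (unif U) A \<le> prob_of N P A * harm N)"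
proof -
  let ?S = "{1..N}"
  define f where "f x = P x * real (rk ?S P x)" for x
  have Sne: "?S \<noteq> {}" "finite ?S" using assms by auto
  obtain x0 where x0: "x0 \<in> ?S" "\<forall>y\<in>?S. f y \<le> f x0"
    using Max_in[of "f ` ?S"] Max_ge[of "f ` ?S"] Sne by fastforce
  have rpos: "rk ?S P x > 0" if "x \<in> ?S" for x
    unfolding rk_def using that by (subst card_gt_0_iff) auto
  have Pnn: "P x \<ge> 0" if "x \<in> ?S" for x using assms(2) that unfolding is_distr_def by auto
  have "1 = (\<Sum>x\<in>?S. P x)" using assms(2) unfolding is_distr_def by simp
  also have "\<dots> = (\<Sum>x\<in>?S. f x * (1 / real (rk ?S P x)))"
    by (rule sum.cong) (use rpos in \<open>auto simp: f_def\<close>)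
  also have "\<dots> \<le> (\<Sum>x\<in>?S. f x0 * (1 / real (rk ?S P x)))"
    by (rule sum_mono, rule mult_right_mono) (use x0 in auto)
  also have "\<dots> = f x0 * (\<Sum>x\<in>?S. 1 / real (rk ?S P x))"
    by (simp add: sum_distrib_left)
  also have "\<dots> \<le> f x0 * harm N"
    apply (rule mult_left_mono)
    using rk_sum_le[of ?S N P] apply simp
    using x0 Pnn rpos unfolding f_def by auto
  finally have f1: "1 \<le> f x0 * harm N" .
  have hpos: "harm N > (0::real)" using assms by simp
  have fpos: "f x0 > 0"
  proof (rule ccontr)
    assume "\<not> f x0 > 0"
    hence "f x0 \<le> 0" by simp
    hence "f x0 * harm N \<le> 0" using hpos mult_nonpos_nonneg[of "f x0" "harm N"] by linarith
    thus False using f1 by simp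
  qed
  have Px0: "P x0 > 0" using fpos Pnn[OF x0(1)] unfolding f_def
    by (metis less_eq_real_def mult_eq_0_iff)
  define U where "U = {y\<in>?S. P x0 \<le> P y}"
  have U: "U \<noteq> {}" "U \<subseteq> ?S" "finite U" using x0 by (auto simp: U_def)
  have cardU: "real (card U) = real (rk ?S P x0)" by (simp add: U_def rk_def)
  have "prob_of N (unif U) A \<le> prob_of N P A * harm N" for A
  proof -
    have "prob_of N (unif U) A = (\<Sum>x\<in>U \<inter> A. 1 / real (card U))"
    proof -
      have eq: "{Suc 0..N} \<inter> A \<inter> U = U \<inter> A" using U by auto
      show ?thesis
        unfolding prob_of_def unif_def
        by (subst sum.If_cases) (simp_all add: eq)
    qed
    also have "\<dots> = real (card (U \<inter> A)) / real (card U)" by simp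
    finally have e: "prob_of N (unif U) A = real (card (U \<inter> A)) / real (card U)" .
    have "real (card (U \<inter> A)) * P x0 = (\<Sum>x\<in>U \<inter> A. P x0)" by simp
    also have "\<dots> \<le> (\<Sum>x\<in>U \<inter> A. P x)" by (rule sum_mono) (auto simp: U_def)
    also have "\<dots> \<le> (\<Sum>x\<in>?S \<inter> A. P x)"
      by (rule sum_mono2) (use U Pnn in auto)
    finally have k: "real (card (U \<inter> A)) * P x0 \<le> prob_of N P A" by (simp add: prob_of_def)
    have cU: "real (card U) > 0" using U by (simp add: card_gt_0_iff)
    have "real (card (U \<inter> A)) / real (card U) = real (card (U \<inter> A)) * P x0 / f x0"
      using Px0 cU cardU by (simp add: f_def field_simps)
    also have "\<dots> \<le> prob_of N P A / f x0" using k fpos by (simp add: divide_right_mono)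
    also have "\<dots> \<le> prob_of N P A * harm N"
    proof -
      have pn: "prob_of N P A \<ge> 0" unfolding prob_of_def by (rule sum_nonneg) (use Pnn in auto)
      have "1 / f x0 \<le> harm N" using f1 fpos by (simp add: field_simps)
      thus ?thesis using pn by (metis mult_left_mono times_divide_eq_right mult_1_right)
    qed
    finally show ?thesis using e by simp
  qed
  thus ?thesis using U by blast
qed

lemma harm_le_c:
  fixes N :: nat and \<gamma> :: real
  assumes "N \<ge> 2" "0 < \<gamma>" "\<gamma> < 1"
  shows "harm N \<le> (1 + 2 * \<gamma>) * real N powr \<gamma> / (\<gamma> * (1 - real N powr (- \<gamma>)))"
proof -
  have h1: "harm N \<le> 1 + ln (real N)"
    using euler_mascheroni_sequence_decreasing[of 1 N] assms by (simp add: harm_def)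
  define L where "L = ln (real N)"
  have Lpos: "L > 0" using assms by (simp add: L_def)
  have p: "real N powr \<gamma> = exp (\<gamma> * L)" using assms by (simp add: powr_def L_def)
  have pg: "real N powr \<gamma> \<ge> 1 + \<gamma> * L" using p exp_ge_add_one_self[of "\<gamma> * L"] by simp
  have q0: "real N powr (- \<gamma>) > 0" using assms by simp
  have q1: "real N powr (- \<gamma>) < 1" using assms by (intro powr_less_one) auto
  define d where "d = \<gamma> * (1 - real N powr (- \<gamma>))"
  have d: "0 < d" "d \<le> \<gamma>" using q0 q1 assms by (auto simp: d_def mult_left_le)
  have npos: "real N powr \<gamma> > 0" using assms by simp
  have "1 + L \<le> 1 / \<gamma> + L" using assms by (simp add: field_simps)
  also have "\<dots> = (1 + \<gamma> * L) / \<gamma>" using assms by (simp add: field_simps)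
  also have "\<dots> \<le> real N powr \<gamma> / \<gamma>" using pg assms by (simp add: divide_right_mono)
  also have "\<dots> \<le> (1 + 2 * \<gamma>) * real N powr \<gamma> / \<gamma>"
    using npos assms by (intro divide_right_mono) auto
  also have "\<dots> \<le> (1 + 2 * \<gamma>) * real N powr \<gamma> / d"
    using d npos assms by (intro divide_left_mono) auto
  finally show ?thesis using h1 by (simp add: L_def d_def)
qed

theorem lemma3:
  fixes N M :: nat and \<gamma> :: real
    and Q :: "nat \<Rightarrow> nat \<Rightarrow> real" and D :: "nat \<Rightarrow> nat set"
  assumes "N \<ge> 2" and "0 < \<gamma>" and "\<gamma> < 1"
    and "is_ID_code N M Q D"
  shows "\<exists>U :: nat \<Rightarrow> nat set.
     (\<forall>i\<in>{1..M}. U i \<noteq> {} \<and> U i \<subseteq> {1..N}) \<and>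
     (let Q' = (\<lambda>i. unif (U i));
          c = (1 + 2 * \<gamma>) * real N powr \<gamma> / (\<gamma> * (1 - real N powr (- \<gamma>)))
      in (\<forall>i\<in>{1..M}. \<forall>j\<in>{1..M}. i \<noteq> j \<longrightarrow>
             err_cross N Q' D i j \<le> err_cross N Q D i j * c) \<and>
         (\<forall>i\<in>{1..M}. err_miss N Q' D i \<le> err_miss N Q D i * c))"
proof -
  define c where "c = (1 + 2 * \<gamma>) * real N powr \<gamma> / (\<gamma> * (1 - real N powr (- \<gamma>)))"
  have hc: "harm N \<le> c" unfolding c_def by (rule harm_le_c) (use assms in auto)
  have "\<forall>i\<in>{1..M}. \<exists>U. U \<noteq> {} \<and> U \<subseteq> {1..N} \<and>
          (\<forall>A. prob_of N (unif U) A \<le> prob_of N (Q i) A * harm N)"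
    using assms(1,4) main_one unfolding is_ID_code_def by auto
  then obtain U where U: "\<forall>i\<in>{1..M}. U i \<noteq> {} \<and> U i \<subseteq> {1..N} \<and>
          (\<forall>A. prob_of N (unif (U i)) A \<le> prob_of N (Q i) A * harm N)"
    by metis
  have pn: "prob_of N (Q i) A \<ge> 0" if "i \<in> {1..M}" for i A
    using assms(4) that unfolding is_ID_code_def is_distr_def prob_of_def
    by (intro sum_nonneg) auto
  have key: "prob_of N (unif (U i)) A \<le> prob_of N (Q i) A * c" if "i \<in> {1..M}" for i A
  proof -
    have "prob_of N (unif (U i)) A \<le> prob_of N (Q i) A * harm N" using U that by blast
    also have "\<dots> \<le> prob_of N (Q i) A * c" using hc pn[OF that] by (rule mult_left_mono)
    finally show ?thesis .
  qed
  show ?thesis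
    apply (rule exI[of _ U])
    using U key unfolding Let_def err_cross_def err_miss_def c_def by auto
qed

end
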